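(* Let $G=(V,E)$ be a connected graph with at least two vertices that contains neither the claw $K_{1,3}$ nor the path $P_6$ as an induced subgraph. Then for every $v\in V$: $v\in\mathrm{core}(G)$ if and only if $\gamma(G-v)>\gamma(G)$.
   Context: All graphs are finite, simple and undirected. The claw $K_{1,3}$ is the star with one center and three leaves; $P_6$ is the chordless path on six vertices. $\gamma(G)$ is the domination number; a minimum dominating set (mds) is a dominating set of size $\gamma(G)$; $\mathrm{core}(G)$ is the set of vertices belonging to every mds. $G-v$ is $G$ with $v$ deleted. *)

theory Defs
  imports Main
begin

definition graph :: "'a set \<Rightarrow> ('a \<Rightarrow> 'a \<Rightarrow> bool) \<Rightarrow> bool" where
  "graph V E \<longleftrightarrow> finite V \<and> (\<forall>u w. E u w \<longrightarrow> u \<in> V \<and> w \<in> V)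
     \<and> (\<forall>u w. E u w \<longrightarrow> E w u) \<and> (\<forall>u. \<not> E u u)"

definition connected_graph :: "'a set \<Rightarrow> ('a \<Rightarrow> 'a \<Rightarrow> bool) \<Rightarrow> bool" where
  "connected_graph V E \<longleftrightarrow> (\<forall>u\<in>V. \<forall>w\<in>V. E\<^sup>*\<^sup>* u w)"

definition has_induced :: "'a set \<Rightarrow> ('a \<Rightarrow> 'a \<Rightarrow> bool) \<Rightarrow> nat \<Rightarrow> (nat \<Rightarrow> nat \<Rightarrow> bool) \<Rightarrow> bool" where
  "has_induced V E n H \<longleftrightarrow> (\<exists>f. inj_on f {0..<n} \<and> f ` {0..<n} \<subseteq> V \<and>
     (\<forall>i<n. \<forall>j<n. E (f i) (f j) \<longleftrightarrow> H i j))"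

definition claw_adj :: "nat \<Rightarrow> nat \<Rightarrow> bool" where
  "claw_adj i j \<longleftrightarrow> i \<noteq> j \<and> (i = 0 \<or> j = 0)"

definition path_adj :: "nat \<Rightarrow> nat \<Rightarrow> bool" where
  "path_adj i j \<longleftrightarrow> i = Suc j \<or> j = Suc i"

definition claw_free :: "'a set \<Rightarrow> ('a \<Rightarrow> 'a \<Rightarrow> bool) \<Rightarrow> bool" where
  "claw_free V E \<longleftrightarrow> \<not> has_induced V E 4 claw_adj"

definition P6_free :: "'a set \<Rightarrow> ('a \<Rightarrow> 'a \<Rightarrow> bool) \<Rightarrow> bool" where
  "P6_free V E \<longleftrightarrow> \<not> has_induced V E 6 path_adj"

definition dominating :: "'a set \<Rightarrow> ('a \<Rightarrow> 'a \<Rightarrow> bool) \<Rightarrow> 'a set \<Rightarrow> bool" where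
  "dominating V E D \<longleftrightarrow> D \<subseteq> V \<and> (\<forall>x\<in>V. x \<in> D \<or> (\<exists>y\<in>D. E x y))"

definition domination_number :: "'a set \<Rightarrow> ('a \<Rightarrow> 'a \<Rightarrow> bool) \<Rightarrow> nat" where
  "domination_number V E = Min (card ` {D. dominating V E D})"

definition mds :: "'a set \<Rightarrow> ('a \<Rightarrow> 'a \<Rightarrow> bool) \<Rightarrow> 'a set \<Rightarrow> bool" where
  "mds V E D \<longleftrightarrow> dominating V E D \<and> card D = domination_number V E"

definition core :: "'a set \<Rightarrow> ('a \<Rightarrow> 'a \<Rightarrow> bool) \<Rightarrow> 'a set" where
  "core V E = {v\<in>V. \<forall>D. mds V E D \<longrightarrow> v \<in> D}"

definition del_vertex_V :: "'a set \<Rightarrow> 'a \<Rightarrow> 'a set" where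
  "del_vertex_V V v = V - {v}"

definition del_vertex_E :: "('a \<Rightarrow> 'a \<Rightarrow> bool) \<Rightarrow> 'a \<Rightarrow> 'a \<Rightarrow> 'a \<Rightarrow> bool" where
  "del_vertex_E E v x y \<longleftrightarrow> E x y \<and> x \<noteq> v \<and> y \<noteq> v"

end

theory Submission
  imports Defs
begin


lemma g_sym: "graph V E \<Longrightarrow> E x y \<Longrightarrow> E y x" unfolding graph_def by blast
lemma g_irr: "graph V E \<Longrightarrow> \<not> E x x" unfolding graph_def by blast
lemma g_inV1: "graph V E \<Longrightarrow> E x y \<Longrightarrow> x \<in> V" unfolding graph_def by blast
lemma g_inV2: "graph V E \<Longrightarrow> E x y \<Longrightarrow> y \<in> V" unfolding graph_def by blast

lemma less4: "(i::nat) < 4 \<Longrightarrow> i = 0 \<or> i = 1 \<or> i = 2 \<or> i = 3" by auto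
lemma less6: "(i::nat) < 6 \<Longrightarrow> i = 0 \<or> i = 1 \<or> i = 2 \<or> i = 3 \<or> i = 4 \<or> i = 5" by auto

lemma claw_contra:
  assumes g: "graph V E" and cf: "claw_free V E"
    and "E c a" "E c b" "E c d" "a \<noteq> b" "a \<noteq> d" "b \<noteq> d"
    and "\<not> E a b" "\<not> E a d" "\<not> E b d"
  shows False
proof -
  have ne: "c \<noteq> a" "c \<noteq> b" "c \<noteq> d" using assms g_irr[OF g] by metis+
  have s: "E a c" "E b c" "E d c" "\<not> E b a" "\<not> E d a" "\<not> E d b"
    using assms g_sym[OF g] by metis+
  have ir: "\<not> E x x" for x using g_irr[OF g] .
  let ?f = "nth [c,a,b,d]"
  have "has_induced V E 4 claw_adj"
    unfolding has_induced_def
  proof (intro exI[of _ ?f] conjI)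
    show "inj_on ?f {0..<4}" by (rule inj_on_nth) (use assms ne in auto)
    show "?f ` {0..<4} \<subseteq> V"
    proof
      fix x assume "x \<in> ?f ` {0..<4}"
      then obtain i where "i < 4" "x = ?f i" by auto
      then show "x \<in> V" using less4[of i] g_inV1[OF g] g_inV2[OF g] assms by auto
    qed
    show "\<forall>i<4. \<forall>j<4. E (?f i) (?f j) = claw_adj i j"
    proof (intro allI impI)
      fix i j :: nat assume "i < 4" "j < 4"
      then show "E (?f i) (?f j) = claw_adj i j"
        using less4[OF \<open>i < 4\<close>] less4[OF \<open>j < 4\<close>] assms s ir unfolding claw_adj_def
        by (elim disjE) simp_all
    qed
  qed
  then show False using cf unfolding claw_free_def by blast
qed

lemma p6_contra:
  assumes g: "graph V E" and pf: "P6_free V E"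
    and e: "E a b" "E b c" "E c d" "E d e" "E e f"
    and n: "\<not> E a c" "\<not> E a d" "\<not> E a e" "\<not> E a f" "\<not> E b d" "\<not> E b e" "\<not> E b f"
       "\<not> E c e" "\<not> E c f" "\<not> E d f"
  shows False
proof -
  have ir: "\<not> E x x" for x using g_irr[OF g] .
  have s: "\<And>x y. E x y \<Longrightarrow> E y x" using g_sym[OF g] by blast
  have rs: "E b a" "E c b" "E d c" "E e d" "E f e" "\<not> E c a" "\<not> E d a" "\<not> E e a" "\<not> E f a"
    "\<not> E d b" "\<not> E e b" "\<not> E f b" "\<not> E e c" "\<not> E f c" "\<not> E f d" using e n s by blast+
  have dist: "distinct [a,b,c,d,e,f]" using e n ir s by auto
  let ?f = "nth [a,b,c,d,e,f]"
  have "has_induced V E 6 path_adj"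
    unfolding has_induced_def
  proof (intro exI[of _ ?f] conjI)
    show "inj_on ?f {0..<6}" by (rule inj_on_nth) (use dist in auto)
    show "?f ` {0..<6} \<subseteq> V"
    proof
      fix x assume "x \<in> ?f ` {0..<6}"
      then obtain i where "i < 6" "x = ?f i" by auto
      then show "x \<in> V" using less6[of i] g_inV1[OF g] g_inV2[OF g] e by auto
    qed
    show "\<forall>i<6. \<forall>j<6. E (?f i) (?f j) = path_adj i j"
    proof (intro allI impI)
      fix i j :: nat assume "i < 6" "j < 6"
      then show "E (?f i) (?f j) = path_adj i j"
        using less6[OF \<open>i < 6\<close>] less6[OF \<open>j < 6\<close>] e n ir rs unfolding path_adj_def
        by (elim disjE) simp_all
    qed
  qed
  then show False using pf unfolding P6_free_def by blast
qed


lemma dom_fin: "finite V \<Longrightarrow> finite {D. dominating V E D}"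
  by (rule finite_subset[of _ "Pow V"]) (auto simp: dominating_def)

lemma dom_number_le:
  assumes "finite V" "dominating V E D"
  shows "domination_number V E \<le> card D"
  unfolding domination_number_def using dom_fin[OF assms(1)] assms(2) by (intro Min_le) auto

lemma dom_number_ex:
  assumes "finite V"
  shows "\<exists>D. dominating V E D \<and> card D = domination_number V E"
proof -
  have "dominating V E V" unfolding dominating_def by blast
  hence "Min (card ` {D. dominating V E D}) \<in> card ` {D. dominating V E D}"
    using dom_fin[OF assms] by (intro Min_in) auto
  thus ?thesis unfolding domination_number_def by force
qed

theorem proposition4:
  fixes V :: "'a set" and E :: "'a \<Rightarrow> 'a \<Rightarrow> bool"
  assumes "graph V E" and "connected_graph V E" and "card V \<ge> 2"
    and "claw_free V E" and "P6_free V E"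
    and "v \<in> V"
  shows "v \<in> core V E \<longleftrightarrow>
    domination_number (del_vertex_V V v) (del_vertex_E E v) > domination_number V E"
proof -
  note g = assms(1)
  have fin: "finite V" using g unfolding graph_def by blast
  have sym: "\<And>x y. E x y \<Longrightarrow> E y x" using g_sym[OF g] by blast
  have irr: "\<And>x. \<not> E x x" using g_irr[OF g] by blast
  have inV: "\<And>x y. E x y \<Longrightarrow> x \<in> V" using g_inV1[OF g] by blast
  have claw: "\<And>c a b d. E c a \<Longrightarrow> E c b \<Longrightarrow> E c d \<Longrightarrow> a \<noteq> b \<Longrightarrow> a \<noteq> d \<Longrightarrow> b \<noteq> d
      \<Longrightarrow> \<not> E a b \<Longrightarrow> \<not> E a d \<Longrightarrow> \<not> E b d \<Longrightarrow> False"
    using claw_contra[OF g assms(4)] by blast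
  have p6: "\<And>a b c d e f. E a b \<Longrightarrow> E b c \<Longrightarrow> E c d \<Longrightarrow> E d e \<Longrightarrow> E e f \<Longrightarrow>
      \<not> E a c \<Longrightarrow> \<not> E a d \<Longrightarrow> \<not> E a e \<Longrightarrow> \<not> E a f \<Longrightarrow> \<not> E b d \<Longrightarrow> \<not> E b e \<Longrightarrow> \<not> E b f \<Longrightarrow>
      \<not> E c e \<Longrightarrow> \<not> E c f \<Longrightarrow> \<not> E d f \<Longrightarrow> False"
    using p6_contra[OF g assms(5)] by blast
  define \<gamma> where "\<gamma> = domination_number V E"
  define \<gamma>' where "\<gamma>' = domination_number (del_vertex_V V v) (del_vertex_E E v)"
  have finV': "finite (del_vertex_V V v)" using fin unfolding del_vertex_V_def by blast
  show ?thesis unfolding \<gamma>_def[symmetric] \<gamma>'_def[symmetric]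
  proof
    assume "\<gamma> < \<gamma>'"
    show "v \<in> core V E" unfolding core_def
    proof (intro CollectI conjI allI impI)
      show "v \<in> V" by fact
      fix D assume mD: "mds V E D"
      show "v \<in> D"
      proof (rule ccontr)
        assume vD: "v \<notin> D"
        have "dominating (del_vertex_V V v) (del_vertex_E E v) D"
          using mD vD unfolding mds_def dominating_def del_vertex_V_def del_vertex_E_def by blast
        hence "\<gamma>' \<le> card D" using dom_number_le[OF finV'] \<gamma>'_def by blast
        moreover have "card D = \<gamma>" using mD unfolding mds_def \<gamma>_def by blast
        ultimately show False using \<open>\<gamma> < \<gamma>'\<close> by simp
      qed
    qed
  next
    assume core: "v \<in> core V E"
    show "\<gamma> < \<gamma>'"
    proof (rule ccontr)
      assume "\<not> \<gamma> < \<gamma>'"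
      hence le: "\<gamma>' \<le> \<gamma>" by simp
      have nocore: "False" if "S \<subseteq> V" "v \<notin> S" "card S \<le> \<gamma>" "\<forall>x\<in>V. x \<in> S \<or> (\<exists>y\<in>S. E x y)" for S
      proof -
        have dS: "dominating V E S" using that unfolding dominating_def by blast
        have "\<gamma> \<le> card S" using dom_number_le[OF fin dS] by (simp add: \<gamma>_def)
        hence "mds V E S" unfolding mds_def using dS that(3) \<gamma>_def by simp
        thus False using core that(2) unfolding core_def by blast
      qed
      obtain D' where dD': "dominating (del_vertex_V V v) (del_vertex_E E v) D'" "card D' = \<gamma>'"
        using dom_number_ex[OF finV'] \<gamma>'_def by blast
      have D'V: "D' \<subseteq> V - {v}" using dD'(1) unfolding dominating_def del_vertex_V_def by blast
      have D'dom: "\<forall>x\<in>V - {v}. x \<in> D' \<or> (\<exists>y\<in>D'. E x y)"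
        using dD'(1) unfolding dominating_def del_vertex_V_def del_vertex_E_def by blast
      have finD': "finite D'" using D'V fin finite_subset by blast
      have cD': "card D' \<le> \<gamma>" using dD'(2) le by simp
      have step1: "\<not> E v u" if "u \<in> D'" for u
      proof
        assume "E v u"
        show False
        proof (rule nocore[of D'])
          show "D' \<subseteq> V" "v \<notin> D'" "card D' \<le> \<gamma>" using D'V cD' by auto
          show "\<forall>x\<in>V. x \<in> D' \<or> (\<exists>y\<in>D'. E x y)" using D'dom \<open>E v u\<close> that by blast
        qed
      qed
      have K: "\<exists>x. x \<noteq> v \<and> x \<notin> D' \<and> E x w \<and> \<not> E x u \<and> x \<noteq> u \<and> (\<forall>w'\<in>D'. w' \<noteq> w \<longrightarrow> \<not> E x w')"
        if a: "E v u" "w \<in> D'" "E u w" for u w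
      proof -
        let ?S = "insert u (D' - {w})"
        have "card ?S \<le> Suc (card (D' - {w}))" by (rule card_insert_le_m1) (use a finD' in auto)
        also have "\<dots> = card D'" using a finD' by (simp add: card_Diff_singleton)
          (metis Suc_pred card_gt_0_iff empty_iff)
        finally have cS: "card ?S \<le> \<gamma>" using cD' by simp
        have "u \<noteq> v" using a irr by blast
        have "u \<in> V" using a inV sym by blast
        have "\<not> (\<forall>x\<in>V. x \<in> ?S \<or> (\<exists>y\<in>?S. E x y))"
        proof
          assume "\<forall>x\<in>V. x \<in> ?S \<or> (\<exists>y\<in>?S. E x y)"
          thus False using nocore[of ?S] cS D'V \<open>u \<noteq> v\<close> \<open>u \<in> V\<close> by blast
        qed
        then obtain x where x: "x \<in> V" "x \<notin> ?S" "\<forall>y\<in>?S. \<not> E x y" by blast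
        have "x \<noteq> v" using x a sym by blast
        have "x \<notin> D'"
        proof
          assume "x \<in> D'"
          hence "x = w" using x by blast
          thus False using x a sym by blast
        qed
        then obtain y where "y \<in> D'" "E x y" using D'dom x \<open>x \<noteq> v\<close> by blast
        hence "y = w" using x by blast
        show ?thesis using x \<open>x \<noteq> v\<close> \<open>x \<notin> D'\<close> \<open>E x y\<close> \<open>y = w\<close> by blast
      qed
      obtain D where dD: "dominating V E D" "card D = \<gamma>"
        using dom_number_ex[OF fin] \<gamma>_def by blast
      have "mds V E D" using dD unfolding mds_def \<gamma>_def by blast
      hence vD: "v \<in> D" using core unfolding core_def by blast
      have DV: "D \<subseteq> V" and Ddom: "\<forall>x\<in>V. x \<in> D \<or> (\<exists>y\<in>D. E x y)"
        using dD(1) unfolding dominating_def by blast+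
      have finD: "finite D" using DV fin finite_subset by blast
      define Pp where "Pp p \<longleftrightarrow> E v p \<and> p \<notin> D \<and> (\<forall>d\<in>D. d \<noteq> v \<longrightarrow> \<not> E p d)" for p
      have privex: "\<exists>z. Pp z \<and> z \<noteq> u \<and> \<not> E z u" if a: "E v u" for u
      proof -
        let ?S = "insert u (D - {v})"
        have "card ?S \<le> Suc (card (D - {v}))" by (rule card_insert_le_m1) (use finD in auto)
        also have "\<dots> = card D" using vD finD by (simp add: card_Diff_singleton)
          (metis Suc_pred card_gt_0_iff empty_iff)
        finally have cS: "card ?S \<le> \<gamma>" using dD by simp
        have "u \<noteq> v" using a irr by blast
        have "u \<in> V" using a inV sym by blast
        have "\<not> (\<forall>x\<in>V. x \<in> ?S \<or> (\<exists>y\<in>?S. E x y))"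
        proof
          assume "\<forall>x\<in>V. x \<in> ?S \<or> (\<exists>y\<in>?S. E x y)"
          thus False using nocore[of ?S] cS DV \<open>u \<noteq> v\<close> \<open>u \<in> V\<close> by blast
        qed
        then obtain x where x: "x \<in> V" "x \<notin> ?S" "\<forall>y\<in>?S. \<not> E x y" by blast
        have "x \<noteq> v" using x a by blast
        have "x \<notin> D" using x \<open>x \<noteq> v\<close> by blast
        then obtain y where "y \<in> D" "E x y" using Ddom x by blast
        hence "y = v" using x by blast
        have "Pp x" unfolding Pp_def using \<open>E x y\<close> \<open>y = v\<close> sym \<open>x \<notin> D\<close> x by blast
        thus ?thesis using x by blast
      qed
      obtain u0 where "u0 \<in> V" "u0 \<noteq> v"
      proof -
        have "\<not> V \<subseteq> {v}"
        proof
          assume "V \<subseteq> {v}"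
          hence "card V \<le> card {v}" by (intro card_mono) auto
          thus False using assms(3) by simp
        qed
        thus ?thesis using that by blast
      qed
      have "E\<^sup>*\<^sup>* v u0" using assms(2) assms(6) \<open>u0 \<in> V\<close> unfolding connected_graph_def by blast
      then obtain u1 where "E v u1"
        by (rule converse_rtranclpE) (use \<open>u0 \<noteq> v\<close> in auto)
      then obtain p1 where "Pp p1" using privex by blast
      hence "E v p1" unfolding Pp_def by blast
      then obtain p2 where "Pp p2" "p2 \<noteq> p1" "\<not> E p2 p1" using privex by blast
      have P1: "E v p1" "p1 \<notin> D" "\<And>d. d \<in> D \<Longrightarrow> d \<noteq> v \<Longrightarrow> \<not> E p1 d" using \<open>Pp p1\<close> unfolding Pp_def by blast+
      have P2: "E v p2" "p2 \<notin> D" "\<And>d. d \<in> D \<Longrightarrow> d \<noteq> v \<Longrightarrow> \<not> E p2 d" using \<open>Pp p2\<close> unfolding Pp_def by blast+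
      have np12: "\<not> E p1 p2" using \<open>\<not> E p2 p1\<close> sym by blast
      have F2: "\<not> E v d" if "d \<in> D" "d \<noteq> v" for d
      proof
        assume "E v d"
        show False
          by (rule claw[of v p1 p2 d]) (use P1 P2 that \<open>E v d\<close> np12 \<open>p2 \<noteq> p1\<close> in auto)
      qed
      have F3: False if "E z p1" "E z p2" "z \<noteq> v" "\<not> E z v" for z
      proof -
        have "z \<in> V" using that inV by blast
        have "z \<notin> D" using that P1 sym by blast
        then obtain d where "d \<in> D" "E z d" using Ddom \<open>z \<in> V\<close> by blast
        have "d \<noteq> v" using \<open>E z d\<close> that by blast
        show False
          by (rule claw[of z p1 p2 d]) (use P1 P2 that \<open>d \<in> D\<close> \<open>E z d\<close> \<open>d \<noteq> v\<close> np12 \<open>p2 \<noteq> p1\<close> in auto)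
      qed
      have p1V: "p1 \<in> V" "p2 \<in> V" using P1 P2 inV sym by blast+
      have p1v: "p1 \<noteq> v" "p2 \<noteq> v" using P1 P2 irr by blast+
      have "p1 \<notin> D'" "p2 \<notin> D'" using step1 P1 P2 by blast+
      then obtain w1 w2 where w1: "w1 \<in> D'" "E p1 w1" and w2: "w2 \<in> D'" "E p2 w2"
        using D'dom p1V p1v by blast
      have w1v: "w1 \<noteq> v" "\<not> E w1 v" "w2 \<noteq> v" "\<not> E w2 v" using w1 w2 D'V step1 sym by blast+
      have nw1p2: "\<not> E w1 p2" using F3[of w1] w1 sym w1v by blast
      have nw2p1: "\<not> E w2 p1" using F3[of w2] w2 sym w1v by blast
      have w12: "w1 \<noteq> w2" using nw2p1 w1 sym by blast
      have w1D: "w1 \<notin> D" "w2 \<notin> D" using P1 P2 w1 w2 w1v sym by blast+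
      obtain d1 where d1: "d1 \<in> D" "E w1 d1" using Ddom w1D w1 inV sym by blast
      obtain d2 where d2: "d2 \<in> D" "E w2 d2" using Ddom w1D w2 inV sym by blast
      have d1v: "d1 \<noteq> v" "d2 \<noteq> v" using d1 d2 w1v by blast+
      have nd: "\<not> E v d1" "\<not> E p1 d1" "\<not> E p2 d1" "\<not> E v d2" "\<not> E p1 d2" "\<not> E p2 d2"
        using F2 P1 P2 d1 d2 d1v by blast+
      have nvw: "\<not> E v w1" "\<not> E v w2" using w1v sym by blast+
      show False
      proof (cases "E w1 w2")
        case True
        obtain x where x: "x \<noteq> v" "x \<notin> D'" "E x w1" "\<not> E x p1" "x \<noteq> p1" "\<forall>w'\<in>D'. w' \<noteq> w1 \<longrightarrow> \<not> E x w'"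
          using K[of p1 w1] P1 w1 by blast
        have "\<not> E x w2" using x w2 w12 by metis
        show False
          by (rule claw[of w1 p1 w2 x]) (use True x w1 w2 \<open>\<not> E x w2\<close> nw2p1 \<open>p1 \<notin> D'\<close> sym in metis)+
      next
        case nw12: False
        show False
        proof (cases "E d1 w2")
          case False
          show False
            by (rule p6[of d1 w1 p1 v p2 w2]) (use False nw12 d1 w1 w2 P1 P2 nd nvw nw1p2 nw2p1 np12 sym in metis)+
        next
          case dw2: True
          show False
          proof (cases "E d2 w1")
            case False
            show False
              by (rule p6[of d2 w2 p2 v p1 w1]) (use False nw12 d2 w1 w2 P1 P2 nd nvw nw1p2 nw2p1 np12 sym in metis)+
          next
            case True
            define d where "d = d1"
            have dd: "d \<in> D" "d \<noteq> v" "E d w1" "E d w2" "\<not> E v d" "\<not> E p1 d" "\<not> E p2 d"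
              using d1 d1v dw2 nd sym unfolding d_def by blast+
            obtain x where x: "x \<noteq> v" "x \<notin> D'" "E x w1" "\<not> E x p1" "x \<noteq> p1" "\<forall>w'\<in>D'. w' \<noteq> w1 \<longrightarrow> \<not> E x w'"
              using K[of p1 w1] P1 w1 by blast
            have xw2: "\<not> E x w2" using x w2 w12 by metis
            have xd: "E x d"
            proof (rule ccontr)
              assume "\<not> E x d"
              show False
                by (rule claw[of w1 p1 d x]) (use \<open>\<not> E x d\<close> x w1 dd xw2 P1 sym in metis)+
            qed
            have xv: "E x v"
            proof (rule ccontr)
              assume nxv: "\<not> E x v"
              show False
              proof (cases "E x p2")
                case True
                show False
                  by (rule claw[of p2 v w2 x]) (use True nxv x w2 P2 xw2 nvw w1v sym irr in metis)+
              next
                case False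
                show False
                  by (rule p6[of x w1 p1 v p2 w2]) (use False nxv nw12 x xw2 w1 w2 P1 P2 nvw nw1p2 nw2p1 np12 sym in metis)+
              qed
            qed
            have xp2: "E x p2"
            proof (rule ccontr)
              assume "\<not> E x p2"
              show False
                by (rule claw[of v p1 p2 x]) (use \<open>\<not> E x p2\<close> xv x P1 P2 np12 nw1p2 \<open>p2 \<noteq> p1\<close> sym in metis)+
            qed
            obtain y where y: "y \<noteq> v" "y \<notin> D'" "E y w2" "\<not> E y p2" "y \<noteq> p2" "\<forall>w'\<in>D'. w' \<noteq> w2 \<longrightarrow> \<not> E y w'"
              using K[of p2 w2] P2 w2 by blast
            have yw1: "\<not> E y w1" using y w1 w12 by metis
            have yd: "E y d"
            proof (rule ccontr)
              assume "\<not> E y d"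
              show False
                by (rule claw[of w2 p2 d y]) (use \<open>\<not> E y d\<close> y w2 dd yw1 P2 sym in metis)+
            qed
            have yv: "E y v"
            proof (rule ccontr)
              assume nyv: "\<not> E y v"
              show False
              proof (cases "E y p1")
                case True
                show False
                  by (rule claw[of p1 v w1 y]) (use True nyv y w1 P1 yw1 nvw w1v sym irr in metis)+
              next
                case False
                show False
                  by (rule p6[of y w2 p2 v p1 w1]) (use False nyv nw12 y yw1 w1 w2 P1 P2 nvw nw1p2 nw2p1 np12 sym in metis)+
              qed
            qed
            have yp1: "E y p1"
            proof (rule ccontr)
              assume "\<not> E y p1"
              show False
                by (rule claw[of v p2 p1 y]) (use \<open>\<not> E y p1\<close> yv y P1 P2 np12 nw2p1 \<open>p2 \<noteq> p1\<close> sym in metis)+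
            qed
            have xy: "\<not> E x y"
            proof
              assume "E x y"
              show False
                by (rule claw[of x p2 w1 y]) (use \<open>E x y\<close> xp2 x y yw1 nw1p2 w1 p1v P1 P2 nvw sym step1 in metis)+
            qed
            have xney: "x \<noteq> y" using xp2 y by blast
            let ?S = "insert x (insert y (D - {v, d}))"
            have c2: "card D \<ge> 2"
            proof -
              have "{v, d} \<subseteq> D" using vD dd by blast
              hence "card {v, d} \<le> card D" using finD by (intro card_mono)
              thus ?thesis using dd by simp
            qed
            have fA: "finite (D - {v, d})" using finD by blast
            have cA: "card (D - {v, d}) = card D - 2" using finD vD dd by (simp add: card_Diff_subset)
            have "card ?S \<le> Suc (Suc (card (D - {v, d})))"
              using fA by (simp add: card_insert_if)
            hence cS: "card ?S \<le> \<gamma>" using cA c2 dD by simp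
            have SV: "?S \<subseteq> V" using DV xv yv inV by blast
            have vS: "v \<notin> ?S" using x y by blast
            have Sdom: "\<forall>z\<in>V. z \<in> ?S \<or> (\<exists>y'\<in>?S. E z y')"
            proof
              fix z assume zV: "z \<in> V"
              show "z \<in> ?S \<or> (\<exists>y'\<in>?S. E z y')"
              proof (cases "z = v \<or> z = d \<or> z \<in> ?S \<or> E z x \<or> E z y")
                case True
                then show ?thesis using xv xd sym by blast
              next
                case False
                hence zn: "z \<noteq> v" "z \<noteq> d" "z \<notin> ?S" "\<not> E z x" "\<not> E z y" "x \<noteq> z" "y \<noteq> z" by blast+
                show ?thesis
                proof (cases "E z v")
                  case True
                  show ?thesis
                    by (rule FalseE, rule claw[of v x y z]) (use True zn xv yv xy xney sym in metis)+
                next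
                  case nzv: False
                  have "z \<notin> D" using zn by blast
                  then obtain y' where "y' \<in> D" "E z y'" using Ddom zV by blast
                  show ?thesis
                  proof (cases "y' = d")
                    case False
                    then show ?thesis using \<open>y' \<in> D\<close> \<open>E z y'\<close> nzv by blast
                  next
                    case True
                    show ?thesis
                      by (rule FalseE, rule claw[of d x y z]) (use True \<open>E z y'\<close> zn xd yd xy xney sym in metis)+
                  qed
                qed
              qed
            qed
            show False using nocore[OF SV vS cS Sdom] .
          qed
        qed
      qed
    qed
  qed
qed

end
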